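(* Let $(A,\Delta,\Delta')$ be a commutative Hopf brace over a field $k$, with antipodes $S$ (for $\Delta$) and $T$ (for $\Delta'$). Define $\rho(a)=a_{(-1)}\otimes a_{(0)}:=S(a_1)a_{21'}\otimes a_{22'}$ and $\varphi(a)=a_{[0]}\otimes a_{[1]}:=T(a_{1'})_{(-1)}a_{2'}\otimes T(a_{1'})_{(0)}a_{3'}$ for $a\in A$. Then the map $$c:A\otimes A\to A\otimes A,\qquad c(x\otimes y)=x_{(-1)}y_{[0]}\otimes x_{(0)}y_{[1]}$$ is a solution of the braid equation $(c\otimes\mathrm{id})(\mathrm{id}\otimes c)(c\otimes\mathrm{id})=(\mathrm{id}\otimes c)(c\otimes\mathrm{id})(\mathrm{id}\otimes c)$ on $A\otimes A\otimes A$.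
   Context: All objects are over a field $k$. A Hopf brace $(A,\Delta,\Delta')$ consists of an algebra $(A,m,1)$ with two Hopf algebra structures $(A,m,1,\Delta,\varepsilon,S)$ and $(A,m,1,\Delta',\epsilon,T)$ on the same algebra such that for all $h\in A$: $h_{1'}\otimes h_{2'1}\otimes h_{2'2}=h_{11'}S(h_2)h_{31'}\otimes h_{12'}\otimes h_{32'}$. It is commutative if $A$ is commutative. Sweedler notation: $\Delta(h)=h_1\otimes h_2$, $\Delta'(h)=h_{1'}\otimes h_{2'}$, iterated $\Delta'$ written $h_{1'}\otimes h_{2'}\otimes h_{3'}$; $h_{21'}$ means $\Delta'$ applied to $h_2$. *)

theory Defs
  imports Main "HOL.Vector_Spaces"
begin

text \<open>Tensors over a field k are represented by formal finite sums (lists) of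
pure tensors.  Two formal sums are equal as elements of the tensor product
iff all products of linear functionals agree on them (linear functionals
separate tensor products of vector spaces).\<close>

type_synonym 'a tens2 = "('a \<times> 'a) list"
type_synonym 'a tens3 = "('a \<times> 'a \<times> 'a) list"

definition lin_fun :: "('k::field \<Rightarrow> 'a::ab_group_add \<Rightarrow> 'a) \<Rightarrow> ('a \<Rightarrow> 'k) \<Rightarrow> bool" where
  "lin_fun sc f \<longleftrightarrow> Vector_Spaces.linear sc (*) f"

definition eq2 :: "('k::field \<Rightarrow> 'a::ab_group_add \<Rightarrow> 'a) \<Rightarrow> 'a tens2 \<Rightarrow> 'a tens2 \<Rightarrow> bool" where
  "eq2 sc t u \<longleftrightarrow> (\<forall>f g. lin_fun sc f \<longrightarrow> lin_fun sc g \<longrightarrow>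
      sum_list [f a * g b. (a,b) \<leftarrow> t] = sum_list [f a * g b. (a,b) \<leftarrow> u])"

definition eq3 :: "('k::field \<Rightarrow> 'a::ab_group_add \<Rightarrow> 'a) \<Rightarrow> 'a tens3 \<Rightarrow> 'a tens3 \<Rightarrow> bool" where
  "eq3 sc t u \<longleftrightarrow> (\<forall>f g h. lin_fun sc f \<longrightarrow> lin_fun sc g \<longrightarrow> lin_fun sc h \<longrightarrow>
      sum_list [f a * g b * h c. (a,b,c) \<leftarrow> t] = sum_list [f a * g b * h c. (a,b,c) \<leftarrow> u])"

definition k_algebra :: "('k::field \<Rightarrow> 'a::comm_ring_1 \<Rightarrow> 'a) \<Rightarrow> bool" where
  "k_algebra sc \<longleftrightarrow> vector_space sc \<and> (\<forall>c x y. sc c (x * y) = sc c x * y)"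

text \<open>Hopf algebra structure (D = comultiplication, e = counit, S = antipode)
on the algebra ('a, *, 1) over k.  D x is any representative of \<Delta>(x).\<close>

definition hopf_algebra ::
  "('k::field \<Rightarrow> 'a::comm_ring_1 \<Rightarrow> 'a) \<Rightarrow> ('a \<Rightarrow> 'a tens2) \<Rightarrow> ('a \<Rightarrow> 'k) \<Rightarrow> ('a \<Rightarrow> 'a) \<Rightarrow> bool" where
  "hopf_algebra sc D e S \<longleftrightarrow>
     k_algebra sc \<and>
     \<comment> \<open>D is k-linear\<close>
     (\<forall>x y. eq2 sc (D (x + y)) (D x @ D y)) \<and>
     (\<forall>c x. eq2 sc (D (sc c x)) [(sc c a, b). (a,b) \<leftarrow> D x]) \<and>
     \<comment> \<open>coassociativity\<close>
     (\<forall>x. eq3 sc [(a1, a2, b). (a,b) \<leftarrow> D x, (a1,a2) \<leftarrow> D a]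
                  [(a, b1, b2). (a,b) \<leftarrow> D x, (b1,b2) \<leftarrow> D b]) \<and>
     \<comment> \<open>counit\<close>
     lin_fun sc e \<and>
     (\<forall>x. sum_list [sc (e a) b. (a,b) \<leftarrow> D x] = x) \<and>
     (\<forall>x. sum_list [sc (e b) a. (a,b) \<leftarrow> D x] = x) \<and>
     \<comment> \<open>D and e are algebra maps\<close>
     (\<forall>x y. eq2 sc (D (x * y)) [(a * c, b * d). (a,b) \<leftarrow> D x, (c,d) \<leftarrow> D y]) \<and>
     eq2 sc (D 1) [(1, 1)] \<and>
     (\<forall>x y. e (x * y) = e x * e y) \<and> e 1 = 1 \<and>
     \<comment> \<open>antipode\<close>
     Vector_Spaces.linear sc sc S \<and>
     (\<forall>x. sum_list [S a * b. (a,b) \<leftarrow> D x] = sc (e x) 1) \<and>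
     (\<forall>x. sum_list [a * S b. (a,b) \<leftarrow> D x] = sc (e x) 1)"

text \<open>Hopf brace (A, \<Delta>, \<Delta>'): two Hopf algebra structures on the same algebra with
 h1' \<otimes> h2'1 \<otimes> h2'2 = h11' S(h2) h31' \<otimes> h12' \<otimes> h32'.
Commutativity of A is built into the type class comm_ring_1.\<close>

definition hopf_brace ::
  "('k::field \<Rightarrow> 'a::comm_ring_1 \<Rightarrow> 'a) \<Rightarrow> ('a \<Rightarrow> 'a tens2) \<Rightarrow> ('a \<Rightarrow> 'k) \<Rightarrow> ('a \<Rightarrow> 'a)
    \<Rightarrow> ('a \<Rightarrow> 'a tens2) \<Rightarrow> ('a \<Rightarrow> 'k) \<Rightarrow> ('a \<Rightarrow> 'a) \<Rightarrow> bool" where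
  "hopf_brace sc D e S D' e' T \<longleftrightarrow>
     hopf_algebra sc D e S \<and> hopf_algebra sc D' e' T \<and>
     (\<forall>h. eq3 sc
        [(a, b1, b2). (a,b) \<leftarrow> D' h, (b1,b2) \<leftarrow> D b]
        [(p1 * S q * r1, p2, r2). (u,r) \<leftarrow> D h, (p,q) \<leftarrow> D u,
                                  (p1,p2) \<leftarrow> D' p, (r1,r2) \<leftarrow> D' r])"

definition brace_rho :: "('a::comm_ring_1 \<Rightarrow> 'a tens2) \<Rightarrow> ('a \<Rightarrow> 'a) \<Rightarrow> ('a \<Rightarrow> 'a tens2) \<Rightarrow> 'a \<Rightarrow> 'a tens2" where
  "brace_rho D S D' x = [(S p * r, s). (p,q) \<leftarrow> D x, (r,s) \<leftarrow> D' q]"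

definition brace_phi :: "('a::comm_ring_1 \<Rightarrow> 'a tens2) \<Rightarrow> ('a \<Rightarrow> 'a) \<Rightarrow> ('a \<Rightarrow> 'a tens2) \<Rightarrow> ('a \<Rightarrow> 'a) \<Rightarrow> 'a \<Rightarrow> 'a tens2" where
  "brace_phi D S D' T y = [(m * u2, n * v). (u,v) \<leftarrow> D' y, (u1,u2) \<leftarrow> D' u, (m,n) \<leftarrow> brace_rho D S D' (T u1)]"

definition brace_c :: "('a::comm_ring_1 \<Rightarrow> 'a tens2) \<Rightarrow> ('a \<Rightarrow> 'a) \<Rightarrow> ('a \<Rightarrow> 'a tens2) \<Rightarrow> ('a \<Rightarrow> 'a) \<Rightarrow> 'a \<Rightarrow> 'a \<Rightarrow> 'a tens2" where
  "brace_c D S D' T x y = [(m * p, n * q). (m,n) \<leftarrow> brace_rho D S D' x, (p,q) \<leftarrow> brace_phi D S D' T y]"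

definition c_id :: "('a \<Rightarrow> 'a \<Rightarrow> 'a tens2) \<Rightarrow> 'a tens3 \<Rightarrow> 'a tens3" where
  "c_id c t = [(a, b, z). (x,y,z) \<leftarrow> t, (a,b) \<leftarrow> c x y]"

definition id_c :: "('a \<Rightarrow> 'a \<Rightarrow> 'a tens2) \<Rightarrow> 'a tens3 \<Rightarrow> 'a tens3" where
  "id_c c t = [(x, a, b). (x,y,z) \<leftarrow> t, (a,b) \<leftarrow> c y z]"

end

theory Submission
  imports Defs "HOL-Library.Function_Algebras"
begin

lemma vs_self: "vector_space ((*) :: 'k::field \<Rightarrow> 'k \<Rightarrow> 'k)"
  by unfold_locales (simp_all add: algebra_simps)

lemma lin_fun_iff:
  assumes "vector_space sc"
  shows "lin_fun sc f \<longleftrightarrow> (\<forall>x y. f (x + y) = f x + f y) \<and> (\<forall>c x. f (sc c x) = c * f x)"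
  unfolding lin_fun_def Vector_Spaces.linear_def module_hom_def module_hom_axioms_def
    vector_space_def[symmetric]
  using assms vs_self
  by (auto simp: module_iff_vector_space)

lemma linear_iff_sc:
  assumes "vector_space sc"
  shows "Vector_Spaces.linear sc sc f \<longleftrightarrow> (\<forall>x y. f (x + y) = f x + f y) \<and> (\<forall>c x. f (sc c x) = sc c (f x))"
  unfolding Vector_Spaces.linear_def module_hom_def module_hom_axioms_def
  using assms
  by (auto simp: module_iff_vector_space)

lemma sum_list_concat_map:
  "sum_list (map F (concat (map G xs))) = sum_list (map (\<lambda>x. sum_list (map F (G x))) xs)"
  by (induction xs) auto

lemma sum_list_fun_apply: "(sum_list xs :: 'b \<Rightarrow> 'c::monoid_add) z = sum_list (map (\<lambda>h. h z) xs)"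
  by (induction xs) auto

lemma sum_list_sum_swap:
  "sum_list (map (\<lambda>x. \<Sum>i\<in>F. g i x) xs) = (\<Sum>i\<in>F. sum_list (map (g i) xs))"
  by (induction xs) (auto simp: sum.distrib)


lemma lin_zero: assumes "vector_space sc" "lin_fun sc f" shows "f 0 = 0"
proof -
  have "f (0 + 0) = f 0 + f 0" using assms lin_fun_iff by blast
  thus ?thesis by (metis add_cancel_right_right)
qed

lemma lin_sum_expand:
  assumes vs: "vector_space sc" and l: "lin_fun sc f" and fin: "finite F"
  shows "f (\<Sum>i\<in>F. sc (c i) (v i)) = (\<Sum>i\<in>F. c i * f (v i))"
  using fin
proof (induction F rule: finite_induct)
  case empty then show ?case using lin_zero[OF vs l] by simp
next
  case (insert x F)
  have "f (\<Sum>i\<in>insert x F. sc (c i) (v i)) = f (sc (c x) (v x) + (\<Sum>i\<in>F. sc (c i) (v i)))"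
    using insert by simp
  also have "\<dots> = c x * f (v x) + f (\<Sum>i\<in>F. sc (c i) (v i))"
    using l vs lin_fun_iff by metis
  finally show ?case using insert by simp
qed

lemma basis_coords:
  assumes vs: "vector_space sc"
  obtains co :: "'a::ab_group_add \<Rightarrow> 'a \<Rightarrow> 'k::field" where
    "\<And>b. lin_fun sc (co b)" "\<And>v. finite {b. co b v \<noteq> 0}"
    "\<And>v F. finite F \<Longrightarrow> {b. co b v \<noteq> 0} \<subseteq> F \<Longrightarrow> v = (\<Sum>b\<in>F. sc (co b v) b)"
proof -
  interpret vector_space sc by fact
  define B where "B = extend_basis {}"
  have ind: "independent B" and sp: "span B = UNIV"
    unfolding B_def by (simp_all add: independent_extend_basis[OF independent_empty] span_extend_basis[OF independent_empty])
  define co where "co b v = representation B v b" for b v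
  have l: "lin_fun sc (co b)" for b
    unfolding lin_fun_def co_def using linear_representation[OF ind sp] .
  have fi: "finite {b. co b v \<noteq> 0}" for v
    unfolding co_def by (rule finite_representation)
  have ex: "v = (\<Sum>b\<in>F. sc (co b v) b)" if "finite F" "{b. co b v \<noteq> 0} \<subseteq> F" for v F
  proof -
    have "(\<Sum>b\<in>F. sc (co b v) b) = (\<Sum>b | co b v \<noteq> 0. sc (co b v) b)"
      by (rule sum.mono_neutral_right) (use that in auto)
    also have "\<dots> = v" unfolding co_def
      by (rule sum_nonzero_representation_eq[OF ind]) (simp add: sp)
    finally show ?thesis by simp
  qed
  show ?thesis by (rule that[OF l fi ex])
qed

lemma eq2_bil:
  fixes sc :: "'k::field \<Rightarrow> 'a::ab_group_add \<Rightarrow> 'a" and B :: "'a \<Rightarrow> 'a \<Rightarrow> 'k"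
  assumes vs: "vector_space sc" and eq: "eq2 sc t u"
    and l1: "\<And>b. lin_fun sc (\<lambda>a. B a b)" and l2: "\<And>a. lin_fun sc (B a)"
  shows "(\<Sum>(a,b)\<leftarrow>t. B a b) = (\<Sum>(a,b)\<leftarrow>u. B a b)"
proof -
  obtain co :: "'a \<Rightarrow> 'a \<Rightarrow> 'k" where cl: "\<And>b. lin_fun sc (co b)" and cf: "\<And>v. finite {b. co b v \<noteq> 0}"
    and ce: "\<And>v F. finite F \<Longrightarrow> {b. co b v \<noteq> 0} \<subseteq> F \<Longrightarrow> v = (\<Sum>b\<in>F. sc (co b v) b)"
    by (rule basis_coords[OF vs]) iprover
  define W where "W = fst ` set t \<union> snd ` set t \<union> fst ` set u \<union> snd ` set u"
  define F where "F = (\<Union>v\<in>W. {b. co b v \<noteq> 0})"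
  have finF: "finite F" unfolding F_def W_def using cf by auto
  have exp: "B a b = (\<Sum>i\<in>F. \<Sum>j\<in>F. (co i a * co j b) * B i j)" if "a \<in> W" "b \<in> W" for a b
  proof -
    have "B a b = B (\<Sum>i\<in>F. sc (co i a) i) b" using ce[OF finF, of a] that F_def by (metis (no_types, lifting) UN_upper)
    also have "\<dots> = (\<Sum>i\<in>F. co i a * B i b)" by (rule lin_sum_expand[OF vs l1 finF])
    also have "\<dots> = (\<Sum>i\<in>F. co i a * B i (\<Sum>j\<in>F. sc (co j b) j))"
      using ce[OF finF, of b] that F_def by (metis (no_types, lifting) UN_upper)
    also have "\<dots> = (\<Sum>i\<in>F. co i a * (\<Sum>j\<in>F. co j b * B i j))"
      using lin_sum_expand[OF vs l2 finF] by simp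
    also have "\<dots> = (\<Sum>i\<in>F. \<Sum>j\<in>F. (co i a * co j b) * B i j)"
      by (simp add: sum_distrib_left mult.assoc)
    finally show ?thesis .
  qed
  have "(\<Sum>(a,b)\<leftarrow>t. B a b) = (\<Sum>(a,b)\<leftarrow>t. \<Sum>i\<in>F. \<Sum>j\<in>F. (co i a * co j b) * B i j)"
  proof (rule arg_cong[where f=sum_list], rule map_cong)
    fix x assume "x \<in> set t"
    then obtain a b where x: "x = (a,b)" "a \<in> W" "b \<in> W" unfolding W_def by force
    show "(case x of (a,b) \<Rightarrow> B a b) = (case x of (a,b) \<Rightarrow> \<Sum>i\<in>F. \<Sum>j\<in>F. (co i a * co j b) * B i j)"
      using exp[OF x(2,3)] x(1) by simp
  qed simp
  also have "\<dots> = (\<Sum>i\<in>F. \<Sum>j\<in>F. (\<Sum>(a,b)\<leftarrow>t. co i a * co j b) * B i j)"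
    by (simp add: split_def sum_list_sum_swap sum_list_mult_const)
  also have "\<dots> = (\<Sum>i\<in>F. \<Sum>j\<in>F. (\<Sum>(a,b)\<leftarrow>u. co i a * co j b) * B i j)"
    using eq cl unfolding eq2_def by simp
  also have "\<dots> = (\<Sum>(a,b)\<leftarrow>u. \<Sum>i\<in>F. \<Sum>j\<in>F. (co i a * co j b) * B i j)"
    by (simp add: split_def sum_list_sum_swap sum_list_mult_const)
  also have "\<dots> = (\<Sum>(a,b)\<leftarrow>u. B a b)"
  proof (rule arg_cong[where f=sum_list], rule map_cong)
    fix x assume "x \<in> set u"
    then obtain a b where x: "x = (a,b)" "a \<in> W" "b \<in> W" unfolding W_def by force
    show "(case x of (a,b) \<Rightarrow> \<Sum>i\<in>F. \<Sum>j\<in>F. (co i a * co j b) * B i j) = (case x of (a,b) \<Rightarrow> B a b)"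
      using exp[OF x(2,3)] x(1) by simp
  qed simp
  finally show ?thesis .
qed


lemma eq3_tril:
  fixes sc :: "'k::field \<Rightarrow> 'a::ab_group_add \<Rightarrow> 'a" and M :: "'a \<Rightarrow> 'a \<Rightarrow> 'a \<Rightarrow> 'k"
  assumes vs: "vector_space sc" and eq: "eq3 sc t u"
    and l1: "\<And>b c. lin_fun sc (\<lambda>a. M a b c)" and l2: "\<And>a c. lin_fun sc (\<lambda>b. M a b c)"
    and l3: "\<And>a b. lin_fun sc (M a b)"
  shows "(\<Sum>(a,b,c)\<leftarrow>t. M a b c) = (\<Sum>(a,b,c)\<leftarrow>u. M a b c)"
proof -
  obtain co :: "'a \<Rightarrow> 'a \<Rightarrow> 'k" where cl: "\<And>b. lin_fun sc (co b)" and cf: "\<And>v. finite {b. co b v \<noteq> 0}"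
    and ce: "\<And>v F. finite F \<Longrightarrow> {b. co b v \<noteq> 0} \<subseteq> F \<Longrightarrow> v = (\<Sum>b\<in>F. sc (co b v) b)"
    by (rule basis_coords[OF vs]) iprover
  define W where "W = fst ` set t \<union> (fst o snd) ` set t \<union> (snd o snd) ` set t \<union>
      fst ` set u \<union> (fst o snd) ` set u \<union> (snd o snd) ` set u"
  define F where "F = (\<Union>v\<in>W. {b. co b v \<noteq> 0})"
  have finF: "finite F" unfolding F_def W_def using cf by auto
  have expv: "v = (\<Sum>b\<in>F. sc (co b v) b)" if "v \<in> W" for v
    using ce[OF finF, of v] that F_def by (metis (no_types, lifting) UN_upper)
  have exp: "M a b c = (\<Sum>i\<in>F. \<Sum>j\<in>F. \<Sum>l\<in>F. (co i a * co j b * co l c) * M i j l)"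
    if "a \<in> W" "b \<in> W" "c \<in> W" for a b c
  proof -
    have "M a b c = M (\<Sum>i\<in>F. sc (co i a) i) b c" using expv[OF that(1)] by simp
    also have "\<dots> = (\<Sum>i\<in>F. co i a * M i b c)" by (rule lin_sum_expand[OF vs l1 finF])
    also have "\<dots> = (\<Sum>i\<in>F. co i a * M i (\<Sum>j\<in>F. sc (co j b) j) c)"
      using expv[OF that(2)] by simp
    also have "\<dots> = (\<Sum>i\<in>F. co i a * (\<Sum>j\<in>F. co j b * M i j c))"
      using lin_sum_expand[OF vs l2 finF] by simp
    also have "\<dots> = (\<Sum>i\<in>F. co i a * (\<Sum>j\<in>F. co j b * M i j (\<Sum>l\<in>F. sc (co l c) l)))"
      using expv[OF that(3)] by simp
    also have "\<dots> = (\<Sum>i\<in>F. co i a * (\<Sum>j\<in>F. co j b * (\<Sum>l\<in>F. co l c * M i j l)))"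
      using lin_sum_expand[OF vs l3 finF] by simp
    also have "\<dots> = (\<Sum>i\<in>F. \<Sum>j\<in>F. \<Sum>l\<in>F. (co i a * co j b * co l c) * M i j l)"
      by (simp add: sum_distrib_left mult.assoc)
    finally show ?thesis .
  qed
  have "(\<Sum>(a,b,c)\<leftarrow>t. M a b c) = (\<Sum>(a,b,c)\<leftarrow>t. \<Sum>i\<in>F. \<Sum>j\<in>F. \<Sum>l\<in>F. (co i a * co j b * co l c) * M i j l)"
  proof (rule arg_cong[where f=sum_list], rule map_cong)
    fix x assume xt: "x \<in> set t"
    obtain a b c where x0: "x = (a,b,c)" by (cases x) auto
    have "fst x \<in> W" "(fst o snd) x \<in> W" "(snd o snd) x \<in> W" unfolding W_def using xt by blast+
    then have x: "x = (a,b,c)" "a \<in> W" "b \<in> W" "c \<in> W" using x0 by auto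
    show "(case x of (a,b,c) \<Rightarrow> M a b c) = (case x of (a,b,c) \<Rightarrow> \<Sum>i\<in>F. \<Sum>j\<in>F. \<Sum>l\<in>F. (co i a * co j b * co l c) * M i j l)"
      using exp[OF x(2,3,4)] x(1) by simp
  qed simp
  also have "\<dots> = (\<Sum>i\<in>F. \<Sum>j\<in>F. \<Sum>l\<in>F. (\<Sum>(a,b,c)\<leftarrow>t. co i a * co j b * co l c) * M i j l)"
    by (simp add: split_def sum_list_sum_swap sum_list_mult_const)
  also have "\<dots> = (\<Sum>i\<in>F. \<Sum>j\<in>F. \<Sum>l\<in>F. (\<Sum>(a,b,c)\<leftarrow>u. co i a * co j b * co l c) * M i j l)"
    using eq cl unfolding eq3_def by simp
  also have "\<dots> = (\<Sum>(a,b,c)\<leftarrow>u. \<Sum>i\<in>F. \<Sum>j\<in>F. \<Sum>l\<in>F. (co i a * co j b * co l c) * M i j l)"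
    by (simp add: split_def sum_list_sum_swap sum_list_mult_const)
  also have "\<dots> = (\<Sum>(a,b,c)\<leftarrow>u. M a b c)"
  proof (rule arg_cong[where f=sum_list], rule map_cong)
    fix x assume xt: "x \<in> set u"
    obtain a b c where x0: "x = (a,b,c)" by (cases x) auto
    have "fst x \<in> W" "(fst o snd) x \<in> W" "(snd o snd) x \<in> W" unfolding W_def using xt by blast+
    then have x: "x = (a,b,c)" "a \<in> W" "b \<in> W" "c \<in> W" using x0 by auto
    show "(case x of (a,b,c) \<Rightarrow> \<Sum>i\<in>F. \<Sum>j\<in>F. \<Sum>l\<in>F. (co i a * co j b * co l c) * M i j l) = (case x of (a,b,c) \<Rightarrow> M a b c)"
      using exp[OF x(2,3,4)] x(1) by simp
  qed simp
  finally show ?thesis .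
qed


lemma sum_list_swap:
  "(\<Sum>x\<leftarrow>xs. \<Sum>y\<leftarrow>ys. h x y) = (\<Sum>y\<leftarrow>ys. \<Sum>x\<leftarrow>xs. (h x y :: 'c::comm_monoid_add))"
  by (induction xs) (auto simp: sum_list_addf)

locale kalg =
  fixes sc :: "'k::field \<Rightarrow> 'a::comm_ring_1 \<Rightarrow> 'a"
  assumes ka: "k_algebra sc"
begin

lemma vs: "vector_space sc" using ka unfolding k_algebra_def by simp

lemma sc_mult_left: "sc c (x * y) = sc c x * y" using ka unfolding k_algebra_def by simp
lemma sc_mult_right: "sc c (x * y) = x * sc c y"
  using sc_mult_left[of c y x] by (simp add: mult.commute)
lemma sc_add: "sc c (x + y) = sc c x + sc c y"
  using vs by (simp add: vector_space_def)

lemma linI: "(\<And>x y. f (x + y) = f x + f y) \<Longrightarrow> (\<And>c x. f (sc c x) = c * f x) \<Longrightarrow> lin_fun sc f"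
  using lin_fun_iff[OF vs] by blast
lemma lin_add: "lin_fun sc f \<Longrightarrow> f (x + y) = f x + f y"
  using lin_fun_iff[OF vs] by blast
lemma lin_scale: "lin_fun sc f \<Longrightarrow> f (sc c x) = c * f x"
  using lin_fun_iff[OF vs] by blast

lemma lin_mult_left: "lin_fun sc f \<Longrightarrow> lin_fun sc (\<lambda>x. f (a * x))"
  by (rule linI) (simp_all add: lin_add lin_scale distrib_left sc_mult_right[symmetric])
lemma lin_mult_right: "lin_fun sc f \<Longrightarrow> lin_fun sc (\<lambda>x. f (x * a))"
  by (rule linI) (simp_all add: lin_add lin_scale distrib_right sc_mult_left[symmetric])
lemma lin_sum_list: "(\<And>i. i \<in> set l \<Longrightarrow> lin_fun sc (F i)) \<Longrightarrow> lin_fun sc (\<lambda>x. \<Sum>i\<leftarrow>l. F i x)"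
proof (induction l)
  case Nil show ?case by (rule linI) simp_all
next
  case (Cons a l)
  have IH: "lin_fun sc (\<lambda>x. \<Sum>i\<leftarrow>l. F i x)" using Cons by simp
  have Fa: "lin_fun sc (F a)" using Cons by simp
  show ?case by (intro linI) (simp_all add: lin_add[OF IH] lin_scale[OF IH] lin_add[OF Fa] lin_scale[OF Fa] distrib_left)
qed
lemma lin_const_mult: "lin_fun sc f \<Longrightarrow> lin_fun sc (\<lambda>x. c * f x)"
  by (rule linI) (simp_all add: lin_add lin_scale distrib_left)

definition tril :: "('a \<Rightarrow> 'a \<Rightarrow> 'a \<Rightarrow> 'k) \<Rightarrow> bool" where
  "tril M \<longleftrightarrow> (\<forall>b c. lin_fun sc (\<lambda>a. M a b c)) \<and> (\<forall>a c. lin_fun sc (\<lambda>b. M a b c)) \<and> (\<forall>a b. lin_fun sc (M a b))"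

definition mu :: "'a tens3 \<Rightarrow> ('a \<Rightarrow> 'a \<Rightarrow> 'a \<Rightarrow> 'k) \<Rightarrow> 'k" where
  "mu t = (\<lambda>M. if tril M then (\<Sum>(a,b,c)\<leftarrow>t. M a b c) else 0)"

definition tprod :: "'a tens3 \<Rightarrow> 'a tens3 \<Rightarrow> 'a tens3" where
  "tprod t u = [(a*a', b*b', c*c'). (a,b,c) \<leftarrow> t, (a',b',c') \<leftarrow> u]"

definition mulR0 where
  "mulR0 \<Phi> \<Psi> = (\<lambda>M. if tril M then \<Phi> (\<lambda>a b c. \<Psi> (\<lambda>a' b' c'. M (a*a') (b*b') (c*c'))) else 0)"

lemma tril_shift: "tril M \<Longrightarrow> tril (\<lambda>a' b' c'. M (a*a') (b*b') (c*c'))"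
  unfolding tril_def by (auto intro: lin_mult_left)

lemma sum_tprod: "(\<Sum>(a,b,c)\<leftarrow>tprod t u. M a b c) = (\<Sum>(a,b,c)\<leftarrow>t. \<Sum>(a',b',c')\<leftarrow>u. M (a*a') (b*b') (c*c'))"
  unfolding tprod_def by (simp add: sum_list_concat_map split_def o_def)

lemma sum_tprod_gen: "sum_list (map G (tprod t u)) = (\<Sum>x\<leftarrow>t. \<Sum>y\<leftarrow>u. G (fst x * fst y, fst (snd x) * fst (snd y), snd (snd x) * snd (snd y)))"
  unfolding tprod_def by (simp add: sum_list_concat_map split_def o_def)

lemma mulR0_mu: "mulR0 (mu t) (mu u) = mu (tprod t u)"
proof (rule ext)
  fix M show "mulR0 (mu t) (mu u) M = mu (tprod t u) M"
  proof (cases "tril M")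
    case True
    have i: "mu u (\<lambda>a' b' c'. M (a*a') (b*b') (c*c')) = (\<Sum>(a',b',c')\<leftarrow>u. M (a*a') (b*b') (c*c'))" for a b c
      using tril_shift[OF True] unfolding mu_def by simp
    have tr: "tril (\<lambda>a b c. \<Sum>(a',b',c')\<leftarrow>u. M (a*a') (b*b') (c*c'))"
      using True unfolding tril_def split_def
      by (auto intro!: lin_sum_list lin_mult_right)
    show ?thesis using True tr unfolding mulR0_def i by (simp add: mu_def sum_tprod)
  qed (simp add: mulR0_def mu_def)
qed

lemma mu_tprod_cong: "mu t = mu t' \<Longrightarrow> mu u = mu u' \<Longrightarrow> mu (tprod t u) = mu (tprod t' u')"
  by (metis mulR0_mu)

lemma mu_tprod_comm: "mu (tprod t u) = mu (tprod u t)"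
  unfolding mu_def
  by (rule ext, simp only: sum_tprod_gen, subst sum_list_swap, simp add: mult.commute)

lemma mu_tprod_assoc: "mu (tprod (tprod t u) v) = mu (tprod t (tprod u v))"
  unfolding mu_def
  by (rule ext, simp only: sum_tprod_gen, simp add: mult.assoc)

lemma tprod_append: "tprod (t @ t') u = tprod t u @ tprod t' u"
  unfolding tprod_def by simp

lemma mu_append: "mu (t @ u) = mu t + mu u"
  unfolding mu_def by (rule ext) simp

lemma mu_Nil: "mu [] = 0"
  unfolding mu_def by (rule ext) simp

end

context kalg begin

definition Rimg where "Rimg = range mu"
definition rep where "rep \<Phi> = (SOME t. mu t = \<Phi>)"
definition mulR where "mulR \<Phi> \<Psi> = mu (tprod (rep \<Phi>) (rep \<Psi>))"
definition oneR where "oneR = mu [(1,1,1)]"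
definition scR :: "'k \<Rightarrow> (('a \<Rightarrow> 'a \<Rightarrow> 'a \<Rightarrow> 'k) \<Rightarrow> 'k) \<Rightarrow> (('a \<Rightarrow> 'a \<Rightarrow> 'a \<Rightarrow> 'k) \<Rightarrow> 'k)"
  where "scR c \<Phi> = (\<lambda>M. c * \<Phi> M)"

lemma mu_img[simp]: "mu t \<in> Rimg" unfolding Rimg_def by simp
lemma mu_rep: "\<Phi> \<in> Rimg \<Longrightarrow> mu (rep \<Phi>) = \<Phi>"
  unfolding Rimg_def rep_def by (auto intro: someI)
lemma RimgE: "\<Phi> \<in> Rimg \<Longrightarrow> (\<And>t. \<Phi> = mu t \<Longrightarrow> P) \<Longrightarrow> P"
  unfolding Rimg_def by auto

lemma mu_tprod_rep1[simp]: "mu (tprod (rep (mu t)) u) = mu (tprod t u)"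
  by (rule mu_tprod_cong) (simp_all add: mu_rep)
lemma mu_tprod_rep2[simp]: "mu (tprod t (rep (mu u))) = mu (tprod t u)"
  by (rule mu_tprod_cong) (simp_all add: mu_rep)

lemma mulR_mu[simp]: "mulR (mu t) (mu u) = mu (tprod t u)"
  unfolding mulR_def by (rule mu_tprod_cong) (simp_all add: mu_rep)

lemma mulR_img[simp]: "mulR \<Phi> \<Psi> \<in> Rimg" unfolding mulR_def by simp
lemma zero_img[simp]: "0 \<in> Rimg" using mu_img[of "[]"] by (simp add: mu_Nil)
lemma add_img[simp]: "\<Phi> \<in> Rimg \<Longrightarrow> \<Psi> \<in> Rimg \<Longrightarrow> \<Phi> + \<Psi> \<in> Rimg"
  by (erule RimgE, erule RimgE) (simp add: mu_append[symmetric])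
lemma oneR_img[simp]: "oneR \<in> Rimg" unfolding oneR_def by simp
lemma sum_list_img[simp]: "(\<And>i. i \<in> set l \<Longrightarrow> F i \<in> Rimg) \<Longrightarrow> (\<Sum>i\<leftarrow>l. F i) \<in> Rimg"
  by (induction l) auto
lemma case_prod_img[simp]: "(\<And>a b. F a b \<in> Rimg) \<Longrightarrow> case_prod F x \<in> Rimg"
  by (cases x) auto

lemma scR_mu: "scR c (mu t) = mu (map (\<lambda>(a,b,d). (sc c a, b, d)) t)"
proof (rule ext)
  fix M show "scR c (mu t) M = mu (map (\<lambda>(a,b,d). (sc c a, b, d)) t) M"
  proof (cases "tril M")
    case True
    then have "M (sc c a) b d = c * M a b d" for a b d
      unfolding tril_def using lin_scale by blast
    then show ?thesis using True unfolding scR_def mu_def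
      by (simp add: split_def o_def sum_list_const_mult)
  qed (simp add: scR_def mu_def)
qed

lemma scR_img[simp]: "\<Phi> \<in> Rimg \<Longrightarrow> scR c \<Phi> \<in> Rimg"
  by (erule RimgE) (simp add: scR_mu)

lemma mulR_comm: "mulR \<Phi> \<Psi> = mulR \<Psi> \<Phi>"
  unfolding mulR_def by (rule mu_tprod_comm)

lemma mulR_assoc: "mulR (mulR \<Phi> \<Psi>) X = mulR \<Phi> (mulR \<Psi> X)"
proof -
  have "mulR (mulR \<Phi> \<Psi>) X = mu (tprod (tprod (rep \<Phi>) (rep \<Psi>)) (rep X))"
    unfolding mulR_def by (rule mu_tprod_cong) (simp_all add: mu_rep)
  also have "\<dots> = mu (tprod (rep \<Phi>) (tprod (rep \<Psi>) (rep X)))" by (rule mu_tprod_assoc)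
  also have "\<dots> = mulR \<Phi> (mulR \<Psi> X)"
    unfolding mulR_def by (rule mu_tprod_cong) (simp_all add: mu_rep)
  finally show ?thesis .
qed

lemma mulR_add_left: "\<Phi> \<in> Rimg \<Longrightarrow> \<Psi> \<in> Rimg \<Longrightarrow> mulR (\<Phi> + \<Psi>) X = mulR \<Phi> X + mulR \<Psi> X"
proof -
  assume a: "\<Phi> \<in> Rimg" "\<Psi> \<in> Rimg"
  obtain t where t: "\<Phi> = mu t" using a(1) by (rule RimgE)
  obtain u where u: "\<Psi> = mu u" using a(2) by (rule RimgE)
  note tu = t u
  have "mulR (\<Phi> + \<Psi>) X = mu (tprod (t @ u) (rep X))"
    unfolding mulR_def by (rule mu_tprod_cong) (simp_all add: tu mu_append mu_rep)
  also have "\<dots> = mu (tprod t (rep X)) + mu (tprod u (rep X))"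
    by (simp add: tprod_append mu_append)
  also have "\<dots> = mulR \<Phi> X + mulR \<Psi> X"
    unfolding tu mulR_def by simp
  finally show ?thesis .
qed

lemma mulR_add_right: "\<Phi> \<in> Rimg \<Longrightarrow> \<Psi> \<in> Rimg \<Longrightarrow> mulR X (\<Phi> + \<Psi>) = mulR X \<Phi> + mulR X \<Psi>"
  by (simp add: mulR_comm[of X] mulR_add_left)

lemma mulR_zero_left[simp]: "mulR 0 X = 0"
proof -
  have "mulR 0 X = mu (tprod [] (rep X))"
    unfolding mulR_def by (rule mu_tprod_cong) (simp_all add: mu_rep mu_Nil)
  also have "\<dots> = 0" by (simp add: tprod_def mu_Nil)
  finally show ?thesis .
qed
lemma mulR_zero_right[simp]: "mulR X 0 = 0"
  by (simp add: mulR_comm[of X])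

lemma mulR_one_left: "\<Phi> \<in> Rimg \<Longrightarrow> mulR oneR \<Phi> = \<Phi>"
proof -
  assume "\<Phi> \<in> Rimg"
  then obtain t where t: "\<Phi> = mu t" by (rule RimgE)
  have "tprod [(1,1,1)] t = t" unfolding tprod_def by (induction t) auto
  then show ?thesis unfolding t oneR_def by simp
qed
lemma mulR_one_right: "\<Phi> \<in> Rimg \<Longrightarrow> mulR \<Phi> oneR = \<Phi>"
  by (simp add: mulR_comm[of \<Phi>] mulR_one_left)

lemma mulR_scR_left: "\<Phi> \<in> Rimg \<Longrightarrow> mulR (scR c \<Phi>) X = scR c (mulR \<Phi> X)"
proof -
  assume "\<Phi> \<in> Rimg"
  then obtain t where t: "\<Phi> = mu t" by (rule RimgE)
  have X: "X' = mu (rep X') \<Longrightarrow> True" for X' by simp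
  have "tprod (map (\<lambda>(a,b,d). (sc c a, b, d)) t) (rep X) = map (\<lambda>(a,b,d). (sc c a, b, d)) (tprod t (rep X))"
    unfolding tprod_def by (simp add: map_concat o_def split_def sc_mult_left)
  moreover have "mulR (scR c \<Phi>) X = mu (tprod (map (\<lambda>(a,b,d). (sc c a, b, d)) t) (rep X))"
    unfolding t scR_mu mulR_def by (rule mu_tprod_cong) (simp_all add: mu_rep)
  moreover have "scR c (mulR \<Phi> X) = mu (map (\<lambda>(a,b,d). (sc c a, b, d)) (tprod t (rep X)))"
    unfolding t mulR_def scR_mu[symmetric] by (rule arg_cong[where f="scR c"], rule mu_tprod_cong) (simp_all add: mu_rep)
  ultimately show ?thesis by simp
qed
lemma mulR_scR_right: "\<Phi> \<in> Rimg \<Longrightarrow> mulR X (scR c \<Phi>) = scR c (mulR X \<Phi>)"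
  by (simp add: mulR_comm[of X] mulR_scR_left)

lemma mulR_sum_left: "(\<And>i. i \<in> set l \<Longrightarrow> F i \<in> Rimg) \<Longrightarrow> mulR (\<Sum>i\<leftarrow>l. F i) Y = (\<Sum>i\<leftarrow>l. mulR (F i) Y)"
  by (induction l) (auto simp: mulR_add_left)
lemma mulR_sum_right: "(\<And>i. i \<in> set l \<Longrightarrow> F i \<in> Rimg) \<Longrightarrow> mulR Y (\<Sum>i\<leftarrow>l. F i) = (\<Sum>i\<leftarrow>l. mulR Y (F i))"
  by (simp add: mulR_comm[of Y] mulR_sum_left)

lemma scR_sum: "scR c (\<Sum>i\<leftarrow>l. F i) = (\<Sum>i\<leftarrow>l. scR c (F i))"
  by (induction l) (auto simp: scR_def fun_eq_iff distrib_left)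
lemma scR_add: "scR c (\<Phi> + \<Psi>) = scR c \<Phi> + scR c \<Psi>"
  by (auto simp: scR_def fun_eq_iff distrib_left)
lemma scR_add_scalar: "scR (a + b) \<Phi> = scR a \<Phi> + scR b \<Phi>"
  by (auto simp: scR_def fun_eq_iff distrib_right)
lemma scR_scR: "scR a (scR b \<Phi>) = scR (a * b) \<Phi>"
  by (auto simp: scR_def fun_eq_iff mult.assoc)
lemma scR_one[simp]: "scR 1 \<Phi> = \<Phi>"
  by (auto simp: scR_def fun_eq_iff)
lemma scR_zero[simp]: "scR c 0 = 0"
  by (auto simp: scR_def fun_eq_iff)

end

context kalg begin

definition linR :: "('a \<Rightarrow> ('a \<Rightarrow> 'a \<Rightarrow> 'a \<Rightarrow> 'k) \<Rightarrow> 'k) \<Rightarrow> bool" where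
  "linR f \<longleftrightarrow> (\<forall>x y. f (x + y) = f x + f y) \<and> (\<forall>c x. f (sc c x) = scR c (f x))"

definition img :: "('a \<Rightarrow> ('a \<Rightarrow> 'a \<Rightarrow> 'a \<Rightarrow> 'k) \<Rightarrow> 'k) \<Rightarrow> bool" where
  "img f \<longleftrightarrow> (\<forall>x. f x \<in> Rimg)"

definition pt where
  "pt f \<longleftrightarrow> linR f \<and> (\<forall>x y. f (x * y) = mulR (f x) (f y)) \<and> f 1 = oneR \<and> img f"

lemma linRI: "(\<And>x y. f (x + y) = f x + f y) \<Longrightarrow> (\<And>c x. f (sc c x) = scR c (f x)) \<Longrightarrow> linR f"
  unfolding linR_def by blast
lemma linR_add: "linR f \<Longrightarrow> f (x + y) = f x + f y" unfolding linR_def by blast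
lemma linR_scale: "linR f \<Longrightarrow> f (sc c x) = scR c (f x)" unfolding linR_def by blast
lemma linR_zero: "linR f \<Longrightarrow> f 0 = 0"
  using linR_add[of f 0 0] by simp
lemma linR_sum: assumes lf: "linR f" shows "f (\<Sum>i\<leftarrow>l. g i) = (\<Sum>i\<leftarrow>l. f (g i))"
  by (induction l) (simp_all add: linR_zero[OF lf] linR_add[OF lf])

lemma imgD[simp]: "img f \<Longrightarrow> f x \<in> Rimg" unfolding img_def by blast
lemma pt_lin: "pt f \<Longrightarrow> linR f" unfolding pt_def by blast
lemma pt_img: "pt f \<Longrightarrow> img f" unfolding pt_def by blast
lemma pt_mult: "pt f \<Longrightarrow> f (x * y) = mulR (f x) (f y)" unfolding pt_def by blast
lemma pt_one: "pt f \<Longrightarrow> f 1 = oneR" unfolding pt_def by blast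
lemma pt_imgD[simp]: "pt f \<Longrightarrow> f x \<in> Rimg" unfolding pt_def img_def by blast

lemma mulR_left_comm: "mulR a (mulR b c) = mulR b (mulR a c)"
  by (metis mulR_assoc mulR_comm)

lemmas mulR_ac = mulR_assoc mulR_comm mulR_left_comm

lemma linR_mulR_left: assumes lf: "linR f" and i: "img f" shows "linR (\<lambda>x. mulR (f x) Y)"
  by (rule linRI) (simp_all add: linR_add[OF lf] linR_scale[OF lf] mulR_add_left mulR_scR_left i)
lemma linR_mulR_right: assumes lf: "linR f" and i: "img f" shows "linR (\<lambda>x. mulR Y (f x))"
  by (rule linRI) (simp_all add: linR_add[OF lf] linR_scale[OF lf] mulR_add_right mulR_scR_right i)
lemma linR_sum_list: assumes l: "\<And>i. linR (F i)" shows "linR (\<lambda>x. \<Sum>i\<leftarrow>l. F i x)"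
  by (rule linRI) (simp_all add: linR_add[OF l] linR_scale[OF l] sum_list_addf scR_sum)
lemma linR_mult_left: assumes lf: "linR f" shows "linR (\<lambda>x. f (a * x))"
  by (rule linRI) (simp_all add: linR_add[OF lf] linR_scale[OF lf] distrib_left sc_mult_right[symmetric])
lemma linR_mult_right: assumes lf: "linR f" shows "linR (\<lambda>x. f (x * a))"
  by (rule linRI) (simp_all add: linR_add[OF lf] linR_scale[OF lf] distrib_right sc_mult_left[symmetric])
lemma linR_comp: assumes lf: "linR f" and lS: "Vector_Spaces.linear sc sc S" shows "linR (\<lambda>x. f (S x))"
proof -
  have "S (x + y) = S x + S y" "S (sc c x) = sc c (S x)" for x y c using lS linear_iff_sc[OF vs] by blast+
  then show ?thesis by (intro linRI) (simp_all add: linR_add[OF lf] linR_scale[OF lf])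
qed

lemma eq2_R:
  assumes eq: "eq2 sc t u" and l1: "\<And>q. linR (\<lambda>p. F p q)" and l2: "\<And>p. linR (F p)"
  shows "(\<Sum>(p,q)\<leftarrow>t. F p q) = (\<Sum>(p,q)\<leftarrow>u. F p q)"
proof (rule ext)
  fix M
  have ap: "(\<Sum>(p,q)\<leftarrow>l. F p q) M = (\<Sum>(p,q)\<leftarrow>l. F p q M)" for l
    by (simp add: sum_list_fun_apply o_def split_def)
  show "(\<Sum>(p,q)\<leftarrow>t. F p q) M = (\<Sum>(p,q)\<leftarrow>u. F p q) M"
    unfolding ap
    by (rule eq2_bil[OF vs eq]) (rule linI; simp add: linR_add[OF l1] linR_scale[OF l1] linR_add[OF l2] linR_scale[OF l2] scR_def)+
qed

lemma eq3_R:
  assumes eq: "eq3 sc t u" and l1: "\<And>q r. linR (\<lambda>p. F p q r)" and l2: "\<And>p r. linR (\<lambda>q. F p q r)"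
    and l3: "\<And>p q. linR (F p q)"
  shows "(\<Sum>(p,q,r)\<leftarrow>t. F p q r) = (\<Sum>(p,q,r)\<leftarrow>u. F p q r)"
proof (rule ext)
  fix M
  have ap: "(\<Sum>(p,q,r)\<leftarrow>l. F p q r) M = (\<Sum>(p,q,r)\<leftarrow>l. F p q r M)" for l
    by (simp add: sum_list_fun_apply o_def split_def)
  show "(\<Sum>(p,q,r)\<leftarrow>t. F p q r) M = (\<Sum>(p,q,r)\<leftarrow>u. F p q r) M"
    unfolding ap
    by (rule eq3_tril[OF vs eq]) (rule linI; simp add: linR_add[OF l1] linR_scale[OF l1] linR_add[OF l2] linR_scale[OF l2] linR_add[OF l3] linR_scale[OF l3] scR_def)+
qed

end

locale hopf = kalg sc for sc :: "'k::field \<Rightarrow> 'a::comm_ring_1 \<Rightarrow> 'a" +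
  fixes D :: "'a \<Rightarrow> ('a \<times> 'a) list" and e :: "'a \<Rightarrow> 'k" and S :: "'a \<Rightarrow> 'a"
  assumes ha: "hopf_algebra sc D e S"
begin

lemma D_add: "eq2 sc (D (x + y)) (D x @ D y)" using ha unfolding hopf_algebra_def by blast
lemma D_sc: "eq2 sc (D (sc c x)) (map (\<lambda>(a, b). (sc c a, b)) (D x))" using ha unfolding hopf_algebra_def by blast
lemma coassoc: "eq3 sc (concat (map (\<lambda>(a, b). map (\<lambda>(a1, a2). (a1, a2, b)) (D a)) (D x)))
         (concat (map (\<lambda>(a, b). map (\<lambda>(b1, b2). (a, b1, b2)) (D b)) (D x)))"
  using ha unfolding hopf_algebra_def by blast
lemma e_lin: "lin_fun sc e" using ha unfolding hopf_algebra_def by blast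
lemma counit_l: "(\<Sum>(a, b)\<leftarrow>D x. sc (e a) b) = x" using ha unfolding hopf_algebra_def by blast
lemma counit_r: "(\<Sum>(a, b)\<leftarrow>D x. sc (e b) a) = x" using ha unfolding hopf_algebra_def by blast
lemma D_mult: "eq2 sc (D (x * y)) (concat (map (\<lambda>(a, b). map (\<lambda>(c, d). (a * c, b * d)) (D y)) (D x)))"
  using ha unfolding hopf_algebra_def by blast
lemma D_one: "eq2 sc (D 1) [(1, 1)]" using ha unfolding hopf_algebra_def by blast
lemma e_mult: "e (x * y) = e x * e y" using ha unfolding hopf_algebra_def by blast
lemma e_one: "e 1 = 1" using ha unfolding hopf_algebra_def by blast
lemma S_lin: "Vector_Spaces.linear sc sc S" using ha unfolding hopf_algebra_def by blast
lemma antipode_l: "(\<Sum>(a, b)\<leftarrow>D x. S a * b) = sc (e x) 1" using ha unfolding hopf_algebra_def by blast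
lemma antipode_r: "(\<Sum>(a, b)\<leftarrow>D x. a * S b) = sc (e x) 1" using ha unfolding hopf_algebra_def by blast

definition cv where "cv f g = (\<lambda>x. \<Sum>(p,q)\<leftarrow>D x. mulR (f p) (g q))"
definition ue where "ue = (\<lambda>x. scR (e x) oneR)"

lemma img_mulR[simp]: "img (\<lambda>x. mulR (F x) (G x))" by (simp add: img_def)

lemma cv_img: "img (cv f g)" unfolding img_def cv_def by (simp add: split_def)

lemma bil_mulR:
  assumes "linR f" "img f" "linR g" "img g"
  shows "linR (\<lambda>p. mulR (f p) (g q))" "linR (\<lambda>q. mulR (f p) (g q))"
  using assms by (auto intro: linR_mulR_left linR_mulR_right)

lemma cv_lin:
  assumes lf: "linR f" and i1: "img f" and lg: "linR g" and i2: "img g"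
  shows "linR (cv f g)"
proof (rule linRI)
  fix x y
  show "cv f g (x + y) = cv f g x + cv f g y"
    unfolding cv_def by (subst eq2_R[OF D_add]) (simp_all add: bil_mulR assms)
next
  fix c x
  show "cv f g (sc c x) = scR c (cv f g x)"
    unfolding cv_def
    by (subst eq2_R[OF D_sc]) (simp_all add: bil_mulR assms o_def split_def linR_scale[OF lf] mulR_scR_left scR_sum)
qed

lemma cv_pt:
  assumes f: "pt f" and g: "pt g"
  shows "pt (cv f g)"
proof -
  note lf = pt_lin[OF f] and lg = pt_lin[OF g] and i1 = pt_img[OF f] and i2 = pt_img[OF g]
  have m: "cv f g (x * y) = mulR (cv f g x) (cv f g y)" for x y
  proof -
    have "cv f g (x * y) = (\<Sum>(a,b)\<leftarrow>D x. \<Sum>(c,d)\<leftarrow>D y. mulR (f (a * c)) (g (b * d)))"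
      unfolding cv_def by (subst eq2_R[OF D_mult]) (simp_all add: bil_mulR lf lg i1 i2 sum_list_concat_map o_def split_def)
    also have "\<dots> = (\<Sum>(a,b)\<leftarrow>D x. \<Sum>(c,d)\<leftarrow>D y. mulR (mulR (f a) (g b)) (mulR (f c) (g d)))"
      by (simp add: pt_mult[OF f] pt_mult[OF g] mulR_ac)
    also have "\<dots> = mulR (cv f g x) (cv f g y)"
      unfolding cv_def by (simp add: mulR_sum_left split_def, simp add: mulR_sum_right)
    finally show ?thesis .
  qed
  have o: "cv f g 1 = oneR"
    unfolding cv_def by (subst eq2_R[OF D_one]) (simp_all add: bil_mulR lf lg i1 i2 pt_one f g mulR_one_left)
  show ?thesis unfolding pt_def using m o cv_lin[OF lf i1 lg i2] cv_img by blast
qed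

lemma ue_pt: "pt ue"
proof -
  have "linR ue" unfolding ue_def
    by (rule linRI) (simp_all add: lin_add[OF e_lin] lin_scale[OF e_lin] scR_add_scalar scR_scR)
  moreover have "ue (x * y) = mulR (ue x) (ue y)" for x y
    unfolding ue_def by (simp add: e_mult mulR_scR_left mulR_scR_right scR_scR mulR_one_left mult.commute)
  moreover have "ue 1 = oneR" unfolding ue_def by (simp add: e_one)
  moreover have "img ue" unfolding img_def ue_def by simp
  ultimately show ?thesis unfolding pt_def by blast
qed

lemma cv_ue_left: assumes lf: "linR f" and i: "img f" shows "cv ue f = f"
proof (rule ext)
  fix x
  have "cv ue f x = (\<Sum>(a,b)\<leftarrow>D x. f (sc (e a) b))"
    unfolding cv_def ue_def by (simp add: mulR_scR_left mulR_one_left i linR_scale[OF lf] split_def)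
  also have "\<dots> = f (\<Sum>(a,b)\<leftarrow>D x. sc (e a) b)"
    by (simp add: linR_sum[OF lf] split_def)
  finally show "cv ue f x = f x" by (simp add: counit_l)
qed

lemma cv_ue_right: assumes lf: "linR f" and i: "img f" shows "cv f ue = f"
proof (rule ext)
  fix x
  have "cv f ue x = (\<Sum>(a,b)\<leftarrow>D x. f (sc (e b) a))"
    unfolding cv_def ue_def by (simp add: mulR_scR_right mulR_one_right i linR_scale[OF lf] split_def)
  also have "\<dots> = f (\<Sum>(a,b)\<leftarrow>D x. sc (e b) a)"
    by (simp add: linR_sum[OF lf] split_def)
  finally show "cv f ue x = f x" by (simp add: counit_r)
qed

lemma cv_assoc:
  assumes lf: "linR f" and i1: "img f" and lg: "linR g" and i2: "img g" and lh: "linR h" and i3: "img h"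
  shows "cv (cv f g) h = cv f (cv g h)"
proof (rule ext)
  fix x
  have "cv (cv f g) h x = (\<Sum>(p,q,r)\<leftarrow>concat (map (\<lambda>(a, b). map (\<lambda>(a1, a2). (a1, a2, b)) (D a)) (D x)).
            mulR (mulR (f p) (g q)) (h r))"
    unfolding cv_def by (simp add: sum_list_concat_map o_def split_def mulR_sum_left)
  also have "\<dots> = (\<Sum>(p,q,r)\<leftarrow>concat (map (\<lambda>(a, b). map (\<lambda>(b1, b2). (a, b1, b2)) (D b)) (D x)).
            mulR (mulR (f p) (g q)) (h r))"
    by (rule eq3_R[OF coassoc]) (auto intro!: linR_mulR_left linR_mulR_right simp: assms)
  also have "\<dots> = cv f (cv g h) x"
    unfolding cv_def by (simp add: sum_list_concat_map o_def split_def mulR_sum_right mulR_assoc)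
  finally show "cv (cv f g) h x = cv f (cv g h) x" .
qed

lemma cv_inv_l: assumes f: "pt f" shows "cv (\<lambda>x. f (S x)) f = ue"
proof (rule ext)
  fix x
  have "cv (\<lambda>x. f (S x)) f x = f (\<Sum>(a,b)\<leftarrow>D x. S a * b)"
    unfolding cv_def by (simp add: pt_mult[OF f] linR_sum[OF pt_lin[OF f]] split_def)
  then show "cv (\<lambda>x. f (S x)) f x = ue x"
    by (simp add: antipode_l ue_def linR_scale[OF pt_lin[OF f]] pt_one[OF f])
qed

lemma cv_inv_r: assumes f: "pt f" shows "cv f (\<lambda>x. f (S x)) = ue"
proof (rule ext)
  fix x
  have "cv f (\<lambda>x. f (S x)) x = f (\<Sum>(a,b)\<leftarrow>D x. a * S b)"
    unfolding cv_def by (simp add: pt_mult[OF f] linR_sum[OF pt_lin[OF f]] split_def)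
  then show "cv f (\<lambda>x. f (S x)) x = ue x"
    by (simp add: antipode_r ue_def linR_scale[OF pt_lin[OF f]] pt_one[OF f])
qed

end

context hopf begin

lemma coassoc_R:
  assumes l1: "\<And>q r. linR (\<lambda>p. G p q r)" and l2: "\<And>p r. linR (\<lambda>q. G p q r)" and l3: "\<And>p q. linR (G p q)"
  shows "(\<Sum>(a,b)\<leftarrow>D x. \<Sum>(a1,a2)\<leftarrow>D a. G a1 a2 b) = (\<Sum>(a,b)\<leftarrow>D x. \<Sum>(b1,b2)\<leftarrow>D b. G a b1 b2)"
proof -
  have "(\<Sum>(p,q,r)\<leftarrow>concat (map (\<lambda>(a, b). map (\<lambda>(a1, a2). (a1, a2, b)) (D a)) (D x)). G p q r) =
        (\<Sum>(p,q,r)\<leftarrow>concat (map (\<lambda>(a, b). map (\<lambda>(b1, b2). (a, b1, b2)) (D b)) (D x)). G p q r)"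
    by (rule eq3_R[OF coassoc l1 l2 l3])
  then show ?thesis by (simp add: sum_list_concat_map o_def split_def)
qed

definition bilR where
  "bilR A \<longleftrightarrow> (\<forall>y. linR (\<lambda>x. A x y)) \<and> (\<forall>x. linR (A x)) \<and> (\<forall>x y. A x y \<in> Rimg)"

definition c2 where
  "c2 A B = (\<lambda>x y. \<Sum>(x1,x2)\<leftarrow>D x. \<Sum>(y1,y2)\<leftarrow>D y. mulR (A x1 y1) (B x2 y2))"

definition E2 where "E2 = (\<lambda>x y. scR (e x * e y) oneR)"

lemma bilR_l1: "bilR A \<Longrightarrow> linR (\<lambda>x. A x y)" unfolding bilR_def by blast
lemma bilR_l2: "bilR A \<Longrightarrow> linR (A x)" unfolding bilR_def by blast
lemma bilR_img[simp]: "bilR A \<Longrightarrow> A x y \<in> Rimg" unfolding bilR_def by blast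
lemma bilR_img1: "bilR A \<Longrightarrow> img (\<lambda>x. A x y)" unfolding bilR_def img_def by blast
lemma bilR_img2: "bilR A \<Longrightarrow> img (A x)" unfolding bilR_def img_def by blast

lemma c2_E_right:
  assumes A: "bilR A" shows "c2 A E2 = A"
proof (rule ext, rule ext)
  fix x y
  have "c2 A E2 x y = (\<Sum>(x1,x2)\<leftarrow>D x. scR (e x2) (\<Sum>(y1,y2)\<leftarrow>D y. A x1 (sc (e y2) y1)))"
    unfolding c2_def E2_def
    by (simp add: mulR_scR_right mulR_one_right A split_def scR_sum scR_scR linR_scale[OF bilR_l2[OF A]] mult.commute)
  also have "\<dots> = (\<Sum>(x1,x2)\<leftarrow>D x. scR (e x2) (A x1 y))"
    by (simp add: linR_sum[OF bilR_l2[OF A], symmetric] split_def counit_r[simplified split_def])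
  also have "\<dots> = (\<Sum>(x1,x2)\<leftarrow>D x. (\<lambda>u. A u y) (sc (e x2) x1))"
    by (simp add: linR_scale[OF bilR_l1[OF A]])
  also have "\<dots> = A x y"
    by (simp add: linR_sum[OF bilR_l1[OF A], symmetric] split_def counit_r[simplified split_def])
  finally show "c2 A E2 x y = A x y" .
qed

lemma c2_E_left:
  assumes A: "bilR A" shows "c2 E2 A = A"
proof (rule ext, rule ext)
  fix x y
  have "c2 E2 A x y = (\<Sum>(x1,x2)\<leftarrow>D x. scR (e x1) (\<Sum>(y1,y2)\<leftarrow>D y. A x2 (sc (e y1) y2)))"
    unfolding c2_def E2_def
    by (simp add: mulR_scR_left mulR_one_left A split_def scR_sum scR_scR linR_scale[OF bilR_l2[OF A]] mult.commute)
  also have "\<dots> = (\<Sum>(x1,x2)\<leftarrow>D x. scR (e x1) (A x2 y))"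
    by (simp add: linR_sum[OF bilR_l2[OF A], symmetric] split_def counit_l[simplified split_def])
  also have "\<dots> = (\<Sum>(x1,x2)\<leftarrow>D x. (\<lambda>u. A u y) (sc (e x1) x2))"
    by (simp add: linR_scale[OF bilR_l1[OF A]])
  also have "\<dots> = A x y"
    by (simp add: linR_sum[OF bilR_l1[OF A], symmetric] split_def counit_l[simplified split_def])
  finally show "c2 E2 A x y = A x y" .
qed


lemma linR_sum_case: "(\<And>a b. linR (F a b)) \<Longrightarrow> linR (\<lambda>x. \<Sum>(a,b)\<leftarrow>l. F a b x)"
  using linR_sum_list[of "\<lambda>i. case i of (a,b) \<Rightarrow> F a b" l] by (simp add: split_def)

lemmas lin_intros = linR_sum_case linR_mulR_left linR_mulR_right bilR_l1 bilR_l2 bilR_img1 bilR_img2 img_mulR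

lemma c2_assoc:
  assumes A: "bilR A" and B: "bilR B" and C: "bilR C"
  shows "c2 (c2 A B) C = c2 A (c2 B C)"
proof (rule ext, rule ext)
  fix x y
  have s1: "c2 (c2 A B) C x y = (\<Sum>(x1,x2)\<leftarrow>D x. \<Sum>(u1,u2)\<leftarrow>D x1. \<Sum>(y1,y2)\<leftarrow>D y. \<Sum>(v1,v2)\<leftarrow>D y1.
      mulR (mulR (A u1 v1) (B u2 v2)) (C x2 y2))"
    unfolding c2_def
    apply (simp add: mulR_sum_left split_def)
    apply (rule arg_cong[where f=sum_list], rule map_cong[OF refl], rule sum_list_swap)
    done
  also have "\<dots> = (\<Sum>(x1,x2)\<leftarrow>D x. \<Sum>(w1,w2)\<leftarrow>D x2. \<Sum>(y1,y2)\<leftarrow>D y. \<Sum>(v1,v2)\<leftarrow>D y1.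
      mulR (mulR (A x1 v1) (B w1 v2)) (C w2 y2))"
    by (rule coassoc_R) (intro lin_intros A B C)+
  also have "\<dots> = (\<Sum>(x1,x2)\<leftarrow>D x. \<Sum>(w1,w2)\<leftarrow>D x2. \<Sum>(y1,y2)\<leftarrow>D y. \<Sum>(z1,z2)\<leftarrow>D y2.
      mulR (mulR (A x1 y1) (B w1 z1)) (C w2 z2))"
  proof -
    have inner: "(\<Sum>(y1,y2)\<leftarrow>D y. \<Sum>(v1,v2)\<leftarrow>D y1. mulR (mulR (A p v1) (B q v2)) (C r y2)) =
      (\<Sum>(y1,y2)\<leftarrow>D y. \<Sum>(z1,z2)\<leftarrow>D y2. mulR (mulR (A p y1) (B q z1)) (C r z2))" for p q r
      by (rule coassoc_R) (intro lin_intros A B C)+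
    show ?thesis by (simp only: inner)
  qed
  also have "\<dots> = c2 A (c2 B C) x y"
    unfolding c2_def
    apply (simp add: mulR_sum_right split_def mulR_assoc)
    apply (rule arg_cong[where f=sum_list], rule map_cong[OF refl], rule sum_list_swap)
    done
  finally show "c2 (c2 A B) C x y = c2 A (c2 B C) x y" .
qed


lemma pt_antipode:
  assumes f: "pt f" shows "pt (\<lambda>x. f (S x))"
proof -
  define h where "h = (\<lambda>x. f (S x))"
  have lf: "linR f" and imf: "img f" using f by (simp_all add: pt_lin pt_img)
  have lh: "linR h" unfolding h_def by (rule linR_comp[OF lf S_lin])
  have imh: "img h" unfolding h_def img_def using f by simp
  have cvl: "cv h f = ue" unfolding h_def by (rule cv_inv_l[OF f])
  have cvr: "cv f h = ue" unfolding h_def by (rule cv_inv_r[OF f])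
  have h1: "h 1 = oneR"
  proof -
    have "cv h f 1 = mulR (h 1) (f 1)"
      unfolding cv_def by (subst eq2_R[OF D_one]) (simp_all add: bil_mulR lf lh imf imh)
    then show ?thesis using cvl by (simp add: ue_def e_one pt_one[OF f] mulR_one_right imh)
  qed
  define P where "P = (\<lambda>x y. h (x * y))"
  define F where "F = (\<lambda>x y. f (x * y))"
  define Q where "Q = (\<lambda>x y. mulR (h x) (h y))"
  have bP: "bilR P" unfolding bilR_def P_def using imh
    by (auto intro: linR_mult_left[OF lh] linR_mult_right[OF lh])
  have bF: "bilR F" unfolding bilR_def F_def using imf
    by (auto intro: linR_mult_left[OF lf] linR_mult_right[OF lf])
  have bQ: "bilR Q" unfolding bilR_def Q_def using imh lh
    by (auto intro: linR_mulR_left linR_mulR_right)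
  have PF: "c2 P F = E2"
  proof (rule ext, rule ext)
    fix x y
    have "c2 P F x y = (\<Sum>(p,q)\<leftarrow>D (x * y). mulR (h p) (f q))"
      unfolding c2_def P_def F_def
      by (subst eq2_R[OF D_mult]) (simp_all add: bil_mulR lf lh imf imh sum_list_concat_map o_def split_def)
    also have "\<dots> = ue (x * y)" using cvl unfolding cv_def by metis
    finally show "c2 P F x y = E2 x y" by (simp add: ue_def E2_def e_mult)
  qed
  have FQ: "c2 F Q = E2"
  proof (rule ext, rule ext)
    fix x y
    have "c2 F Q x y = (\<Sum>(x1,x2)\<leftarrow>D x. \<Sum>(y1,y2)\<leftarrow>D y. mulR (mulR (f x1) (h x2)) (mulR (f y1) (h y2)))"
      unfolding c2_def F_def Q_def by (simp add: pt_mult[OF f] mulR_ac)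
    also have "\<dots> = mulR (cv f h x) (cv f h y)"
      unfolding cv_def by (simp add: mulR_sum_left split_def, simp add: mulR_sum_right)
    finally show "c2 F Q x y = E2 x y"
      by (simp add: cvr ue_def E2_def mulR_scR_left mulR_scR_right scR_scR mulR_one_left mult.commute)
  qed
  have "P = c2 P E2" using c2_E_right[OF bP] by simp
  also have "\<dots> = c2 P (c2 F Q)" by (simp add: FQ)
  also have "\<dots> = c2 (c2 P F) Q" by (simp add: c2_assoc bP bF bQ)
  also have "\<dots> = Q" by (simp add: PF c2_E_left bQ)
  finally have PQ: "P = Q" .
  have "h (x * y) = mulR (h x) (h y)" for x y
    using fun_cong[OF fun_cong[OF PQ, of x], of y] unfolding P_def Q_def .
  then show ?thesis unfolding pt_def using lh h1 imh unfolding h_def by blast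
qed

end

locale grp =
  fixes G :: "'p set" and m :: "'p \<Rightarrow> 'p \<Rightarrow> 'p" and i :: "'p \<Rightarrow> 'p" and u :: 'p
  assumes cl[simp]: "a \<in> G \<Longrightarrow> b \<in> G \<Longrightarrow> m a b \<in> G"
    and cli[simp]: "a \<in> G \<Longrightarrow> i a \<in> G"
    and clu[simp]: "u \<in> G"
    and assoc: "a \<in> G \<Longrightarrow> b \<in> G \<Longrightarrow> c \<in> G \<Longrightarrow> m (m a b) c = m a (m b c)"
    and lu[simp]: "a \<in> G \<Longrightarrow> m u a = a"
    and ru[simp]: "a \<in> G \<Longrightarrow> m a u = a"
    and li[simp]: "a \<in> G \<Longrightarrow> m (i a) a = u"
    and ri[simp]: "a \<in> G \<Longrightarrow> m a (i a) = u"
begin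

lemma li2[simp]: "a \<in> G \<Longrightarrow> b \<in> G \<Longrightarrow> m (i a) (m a b) = b"
  by (simp flip: assoc)
lemma ri2[simp]: "a \<in> G \<Longrightarrow> b \<in> G \<Longrightarrow> m a (m (i a) b) = b"
  by (simp flip: assoc)

lemma cancel_l: "a \<in> G \<Longrightarrow> b \<in> G \<Longrightarrow> c \<in> G \<Longrightarrow> m a b = m a c \<Longrightarrow> b = c"
  by (metis li2)

lemma cancel_r: "a \<in> G \<Longrightarrow> b \<in> G \<Longrightarrow> c \<in> G \<Longrightarrow> m b a = m c a \<Longrightarrow> b = c"
  by (metis assoc ri ru cli)

lemma inv_unique: "a \<in> G \<Longrightarrow> b \<in> G \<Longrightarrow> m a b = u \<Longrightarrow> b = i a"
  by (metis li2 ru cli)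

lemma inv_mult: "a \<in> G \<Longrightarrow> b \<in> G \<Longrightarrow> i (m a b) = m (i b) (i a)"
proof -
  assume a: "a \<in> G" and b: "b \<in> G"
  have "m (m a b) (m (i b) (i a)) = u" using a b by (simp add: assoc)
  then show ?thesis using a b inv_unique[of "m a b" "m (i b) (i a)"] by simp
qed

lemma inv_inv[simp]: "a \<in> G \<Longrightarrow> i (i a) = a"
  by (metis inv_unique cli li)

end

locale skb = g1: grp G m1 i1 u1 + g2: grp G m2 i2 u2
  for G :: "'p set" and m1 i1 u1 m2 i2 u2 +
  assumes br: "a \<in> G \<Longrightarrow> b \<in> G \<Longrightarrow> c \<in> G \<Longrightarrow> m2 a (m1 b c) = m1 (m1 (m2 a b) (i1 a)) (m2 a c)"
begin

definition lam where "lam a b = m1 (i1 a) (m2 a b)"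
definition sig where "sig a b = m2 (m2 (i2 (lam a b)) a) b"

lemma lam_cl[simp]: "a \<in> G \<Longrightarrow> b \<in> G \<Longrightarrow> lam a b \<in> G" unfolding lam_def by simp
lemma sig_cl[simp]: "a \<in> G \<Longrightarrow> b \<in> G \<Longrightarrow> sig a b \<in> G" unfolding sig_def by simp

lemma m2_u1: assumes a: "a \<in> G" shows "m2 a u1 = a"
proof -
  define X where "X = m2 a u1"
  have X: "X \<in> G" unfolding X_def using a by simp
  have eq: "m2 a (m1 u1 u1) = m1 (m1 (m2 a u1) (i1 a)) (m2 a u1)" by (rule br) (simp_all add: a)
  have uu: "m1 u1 u1 = u1" by simp
  from eq have h: "X = m1 (m1 X (i1 a)) X" unfolding uu X_def .
  have "m1 X u1 = X" using X by simp
  also have "\<dots> = m1 (m1 X (i1 a)) X" by (rule h)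
  also have "\<dots> = m1 X (m1 (i1 a) X)" using a X by (simp add: g1.assoc)
  finally have c1: "m1 X u1 = m1 X (m1 (i1 a) X)" .
  have hu: "u1 = m1 (i1 a) X" by (rule g1.cancel_l[OF X _ _ c1]) (simp_all add: a X)
  have "a = m1 a u1" using a by simp
  also have "\<dots> = m1 a (m1 (i1 a) X)" by (simp only: hu)
  also have "\<dots> = X" using a X by simp
  finally show ?thesis unfolding X_def by (rule sym)
qed

lemma u_eq: "u2 = u1"
  using m2_u1[OF g2.clu] by simp

lemma F1: "a \<in> G \<Longrightarrow> b \<in> G \<Longrightarrow> c \<in> G \<Longrightarrow> lam a (m1 b c) = m1 (lam a b) (lam a c)"
  unfolding lam_def by (simp add: br g1.assoc)

lemma F2: "a \<in> G \<Longrightarrow> lam a u1 = u1"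
  unfolding lam_def by (simp add: m2_u1)

lemma F3: "a \<in> G \<Longrightarrow> b \<in> G \<Longrightarrow> lam a (i1 b) = i1 (lam a b)"
proof -
  assume a: "a \<in> G" and b: "b \<in> G"
  have h: "m1 (lam a b) (lam a (i1 b)) = u1" using a b by (simp add: F1[symmetric] F2)
  show ?thesis by (rule g1.inv_unique[OF _ _ h]) (simp_all add: a b)
qed

lemma F4: "a \<in> G \<Longrightarrow> b \<in> G \<Longrightarrow> m2 a b = m1 a (lam a b)"
  unfolding lam_def by simp

lemma F5: "a \<in> G \<Longrightarrow> b \<in> G \<Longrightarrow> c \<in> G \<Longrightarrow> lam a (lam b c) = lam (m2 a b) c"
proof -
  assume a: "a \<in> G" and b: "b \<in> G" and c: "c \<in> G"
  have "lam a (lam b c) = m1 (lam a (i1 b)) (lam a (m2 b c))"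
    using a b c by (simp add: lam_def[of b c] F1)
  also have "\<dots> = m1 (i1 (lam a b)) (m1 (i1 a) (m2 (m2 a b) c))"
    using a b c by (simp add: F3 lam_def[of a "m2 b c"] g2.assoc)
  also have "\<dots> = m1 (m1 (i1 (m2 a b)) a) (m1 (i1 a) (m2 (m2 a b) c))"
    using a b c by (simp add: lam_def[of a b] g1.inv_mult)
  also have "\<dots> = lam (m2 a b) c"
    using a b c by (simp add: g1.assoc lam_def)
  finally show ?thesis .
qed

lemma F6: "a \<in> G \<Longrightarrow> b \<in> G \<Longrightarrow> m2 (lam a b) (sig a b) = m2 a b"
  unfolding sig_def by (simp flip: g2.assoc)

lemma F7: "a \<in> G \<Longrightarrow> b \<in> G \<Longrightarrow> c \<in> G \<Longrightarrow> m2 (lam a b) (lam (sig a b) c) = lam a (m2 b c)"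
proof -
  assume a: "a \<in> G" and b: "b \<in> G" and c: "c \<in> G"
  have "m2 (lam a b) (lam (sig a b) c) = m1 (lam a b) (lam (lam a b) (lam (sig a b) c))"
    using a b c by (simp add: F4)
  also have "\<dots> = m1 (lam a b) (lam (m2 a b) c)"
    using a b c by (simp add: F5 F6)
  also have "\<dots> = m1 (lam a b) (lam a (lam b c))"
    using a b c by (simp add: F5)
  also have "\<dots> = lam a (m2 b c)"
    using a b c by (simp add: F1[symmetric] F4)
  finally show ?thesis .
qed

definition r12 where "r12 P = (case P of (a,b,c) \<Rightarrow> (lam a b, sig a b, c))"
definition r23 where "r23 P = (case P of (a,b,c) \<Rightarrow> (a, lam b c, sig b c))"

theorem braid:
  assumes a: "a \<in> G" and b: "b \<in> G" and c: "c \<in> G"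
  shows "r12 (r23 (r12 (a,b,c))) = r23 (r12 (r23 (a,b,c)))"
proof -
  define a1 b1 where "a1 = lam a b" and "b1 = sig a b"
  define b2 c2 where "b2 = lam b1 c" and "c2 = sig b1 c"
  define b' c' where "b' = lam b c" and "c' = sig b c"
  define a' b'' where "a' = lam a b'" and "b'' = sig a b'"
  have G: "a1 \<in> G" "b1 \<in> G" "b2 \<in> G" "c2 \<in> G" "b' \<in> G" "c' \<in> G" "a' \<in> G" "b'' \<in> G"
    using a b c by (simp_all add: a1_def b1_def b2_def c2_def b'_def c'_def a'_def b''_def)
  have L: "r12 (r23 (r12 (a,b,c))) = (lam a1 b2, sig a1 b2, c2)"
    by (simp add: r12_def r23_def a1_def b1_def b2_def c2_def)
  have R: "r23 (r12 (r23 (a,b,c))) = (a', lam b'' c', sig b'' c')"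
    by (simp add: r12_def r23_def b'_def c'_def a'_def b''_def)
  have e1: "lam a1 b2 = a'"
    using a b c G by (simp add: b2_def F5 a1_def b1_def F6 a'_def b'_def)
  have m12L: "m2 (lam a1 b2) (sig a1 b2) = lam a (m2 b c)"
    using a b c G by (simp add: F6 a1_def b2_def b1_def F7)
  have m12R: "m2 a' (lam b'' c') = lam a (m2 b c)"
    using a b c G by (simp add: a'_def b''_def F7 b'_def c'_def F6)
  have h2: "m2 a' (sig a1 b2) = m2 a' (lam b'' c')" using m12L m12R e1 by simp
  have e2: "sig a1 b2 = lam b'' c'"
    by (rule g2.cancel_l[OF _ _ _ h2]) (simp_all add: G)
  have m3L: "m2 (m2 (lam a1 b2) (sig a1 b2)) c2 = m2 (m2 a b) c"
    using a b c G by (simp add: F6 g2.assoc c2_def b2_def, simp add: g2.assoc[symmetric] a1_def b1_def F6)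
  have m3R: "m2 (m2 a' (lam b'' c')) (sig b'' c') = m2 (m2 a b) c"
    using a b c G by (simp add: g2.assoc F6, simp add: g2.assoc[symmetric] a'_def b''_def F6,
        simp add: g2.assoc b'_def c'_def F6)
  have h3: "m2 (m2 a' (lam b'' c')) c2 = m2 (m2 a' (lam b'' c')) (sig b'' c')" using m3L m3R e1 e2 by simp
  have e3: "c2 = sig b'' c'"
    by (rule g2.cancel_l[OF _ _ _ h3]) (simp_all add: G)
  show ?thesis using L R e1 e2 e3 by simp
qed

end

locale hbrace = kalg sc for sc :: "'k::field \<Rightarrow> 'a::comm_ring_1 \<Rightarrow> 'a" +
  fixes D :: "'a \<Rightarrow> ('a \<times> 'a) list" and e :: "'a \<Rightarrow> 'k" and S :: "'a \<Rightarrow> 'a"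
    and D' :: "'a \<Rightarrow> ('a \<times> 'a) list" and e' :: "'a \<Rightarrow> 'k" and T :: "'a \<Rightarrow> 'a"
  assumes hb: "hopf_brace sc D e S D' e' T"
begin

sublocale h1: hopf sc D e S
  by unfold_locales (use hb in \<open>simp add: hopf_brace_def\<close>)
sublocale h2: hopf sc D' e' T
  by unfold_locales (use hb in \<open>simp add: hopf_brace_def\<close>)

lemma brace_ax: "eq3 sc
        (concat (map (\<lambda>(a, b). map (\<lambda>(b1, b2). (a, b1, b2)) (D b)) (D' h)))
        (concat (map (\<lambda>(u, r). concat (map (\<lambda>(p, q). concat (map (\<lambda>(p1, p2). map (\<lambda>(r1, r2). (p1 * S q * r1, p2, r2)) (D' r)) (D' p))) (D u))) (D h)))"
  using hb unfolding hopf_brace_def by blast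

lemma brace_pt:
  assumes f: "pt f" and g: "pt g" and k: "pt k"
  shows "h2.cv f (h1.cv g k) = h1.cv (h1.cv (h2.cv f g) (\<lambda>x. f (S x))) (h2.cv f k)"
proof (rule ext)
  fix x
  note lf = pt_lin[OF f] and lg = pt_lin[OF g] and lk = pt_lin[OF k]
  note imf = pt_img[OF f] and img = pt_img[OF g] and imk = pt_img[OF k]
  have "h2.cv f (h1.cv g k) x = (\<Sum>(a,b1,b2)\<leftarrow>concat (map (\<lambda>(a, b). map (\<lambda>(b1, b2). (a, b1, b2)) (D b)) (D' x)).
      mulR (f a) (mulR (g b1) (k b2)))"
    unfolding h1.cv_def h2.cv_def by (simp add: sum_list_concat_map o_def split_def mulR_sum_right)
  also have "\<dots> = (\<Sum>(a,b1,b2)\<leftarrow>concat (map (\<lambda>(u, r). concat (map (\<lambda>(p, q). concat (map (\<lambda>(p1, p2). map (\<lambda>(r1, r2). (p1 * S q * r1, p2, r2)) (D' r)) (D' p))) (D u))) (D x)).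
      mulR (f a) (mulR (g b1) (k b2)))"
    by (rule eq3_R[OF brace_ax]) (intro h1.lin_intros lf lg lk imf img imk)+
  also have "\<dots> = h1.cv (h1.cv (h2.cv f g) (\<lambda>x. f (S x))) (h2.cv f k) x"
    unfolding h1.cv_def h2.cv_def
    apply (simp add: sum_list_concat_map o_def split_def pt_mult[OF f])
    apply (simp add: mulR_sum_left)
    apply (simp add: mulR_sum_right)
    apply (simp add: mulR_ac)
    done
  finally show "h2.cv f (h1.cv g k) x = h1.cv (h1.cv (h2.cv f g) (\<lambda>x. f (S x))) (h2.cv f k) x" .
qed


sublocale sk: skb "{f. pt f}" h1.cv "\<lambda>f x. f (S x)" h1.ue h2.cv "\<lambda>f x. f (T x)" h2.ue
proof unfold_locales
  fix a b c assume a: "a \<in> {f. pt f}" and b: "b \<in> {f. pt f}" and c: "c \<in> {f. pt f}"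
  then have a: "pt a" and b: "pt b" and c: "pt c" by simp_all
  show "h1.cv a b \<in> {f. pt f}" "h2.cv a b \<in> {f. pt f}" using a b by (simp_all add: h1.cv_pt h2.cv_pt)
  show "(\<lambda>x. a (S x)) \<in> {f. pt f}" "(\<lambda>x. a (T x)) \<in> {f. pt f}"
    using a by (simp_all add: h1.pt_antipode h2.pt_antipode)
  show "h1.cv (h1.cv a b) c = h1.cv a (h1.cv b c)" "h2.cv (h2.cv a b) c = h2.cv a (h2.cv b c)"
    using a b c by (simp_all add: h1.cv_assoc h2.cv_assoc pt_lin pt_img)
  show "h1.cv h1.ue a = a" "h1.cv a h1.ue = a" "h2.cv h2.ue a = a" "h2.cv a h2.ue = a"
    using a by (simp_all add: h1.cv_ue_left h1.cv_ue_right h2.cv_ue_left h2.cv_ue_right pt_lin pt_img)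
  show "h1.cv (\<lambda>x. a (S x)) a = h1.ue" "h1.cv a (\<lambda>x. a (S x)) = h1.ue"
       "h2.cv (\<lambda>x. a (T x)) a = h2.ue" "h2.cv a (\<lambda>x. a (T x)) = h2.ue"
    using a by (simp_all add: h1.cv_inv_l h1.cv_inv_r h2.cv_inv_l h2.cv_inv_r)
  show "h2.cv a (h1.cv b c) = h1.cv (h1.cv (h2.cv a b) (\<lambda>x. a (S x))) (h2.cv a c)"
    using a b c by (rule brace_pt)
qed (simp_all add: h1.ue_pt h2.ue_pt)


lemma lam_eq: "sk.lam f1 f2 = h1.cv (\<lambda>x. f1 (S x)) (h2.cv f1 f2)"
  by (simp add: sk.lam_def)
lemma sig_eq: "sk.sig f1 f2 = h2.cv (h2.cv (\<lambda>x. sk.lam f1 f2 (T x)) f1) f2"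
  by (simp add: sk.sig_def)

lemma rho_sum:
  assumes f1: "pt f1" and f2: "pt f2"
  shows "(\<Sum>(m,n)\<leftarrow>brace_rho D S D' x. mulR (f1 m) (f2 n)) = sk.lam f1 f2 x"
  unfolding brace_rho_def lam_eq h1.cv_def h2.cv_def
  by (simp add: sum_list_concat_map o_def split_def pt_mult[OF f1] mulR_sum_right mulR_assoc)

lemma phi_sum:
  assumes f1: "pt f1" and f2: "pt f2"
  shows "(\<Sum>(m,n)\<leftarrow>brace_phi D S D' T y. mulR (f1 m) (f2 n)) = sk.sig f1 f2 y"
proof -
  have lamT: "sk.lam f1 f2 (T w) = (\<Sum>(m,n)\<leftarrow>brace_rho D S D' (T w). mulR (f1 m) (f2 n))" for w
    by (simp add: rho_sum f1 f2)
  show ?thesis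
    unfolding brace_phi_def sig_eq h2.cv_def lamT
    apply (simp add: sum_list_concat_map o_def split_def pt_mult[OF f1] pt_mult[OF f2])
    apply (simp add: mulR_sum_left)
    apply (simp add: mulR_ac)
    done
qed

lemma c_sum:
  assumes f1: "pt f1" and f2: "pt f2"
  shows "(\<Sum>(a,b)\<leftarrow>brace_c D S D' T x y. mulR (f1 a) (f2 b)) = mulR (sk.lam f1 f2 x) (sk.sig f1 f2 y)"
proof -
  have "mulR (sk.lam f1 f2 x) (sk.sig f1 f2 y) =
    mulR (\<Sum>(m,n)\<leftarrow>brace_rho D S D' x. mulR (f1 m) (f2 n)) (\<Sum>(m,n)\<leftarrow>brace_phi D S D' T y. mulR (f1 m) (f2 n))"
    by (simp add: rho_sum phi_sum f1 f2)
  also have "\<dots> = (\<Sum>(a,b)\<leftarrow>brace_c D S D' T x y. mulR (f1 a) (f2 b))"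
    unfolding brace_c_def
    apply (simp add: sum_list_concat_map o_def split_def pt_mult[OF f1] pt_mult[OF f2])
    apply (simp add: mulR_sum_left)
    apply (simp add: mulR_sum_right)
    apply (simp add: mulR_ac)
    done
  finally show ?thesis by simp
qed

definition Ev where
  "Ev P t = (case P of (f1,f2,f3) \<Rightarrow> \<Sum>(a,b,c)\<leftarrow>t. mulR (mulR (f1 a) (f2 b)) (f3 c))"

lemma Ev_c_id:
  assumes f1: "pt f1" and f2: "pt f2"
  shows "Ev (f1,f2,f3) (c_id (brace_c D S D' T) t) = Ev (sk.r12 (f1,f2,f3)) t"
  unfolding Ev_def c_id_def sk.r12_def
  by (simp add: sum_list_concat_map o_def split_def c_sum[OF f1 f2, symmetric] mulR_sum_left)

lemma Ev_id_c:
  assumes f2: "pt f2" and f3: "pt f3"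
  shows "Ev (f1,f2,f3) (id_c (brace_c D S D' T) t) = Ev (sk.r23 (f1,f2,f3)) t"
  unfolding Ev_def id_c_def sk.r23_def
  by (simp add: sum_list_concat_map o_def split_def mulR_assoc c_sum[OF f2 f3, symmetric] mulR_sum_right)


definition io1 where "io1 a = mu [(a, 1, 1)]"
definition io2 where "io2 a = mu [(1, a, 1)]"
definition io3 where "io3 a = mu [(1, 1, a)]"

lemma tril_lins:
  assumes "tril M"
  shows "lin_fun sc (\<lambda>a. M a b d)" "lin_fun sc (\<lambda>b. M a b d)" "lin_fun sc (\<lambda>d. M a b d)"
  using assms unfolding tril_def by blast+

lemma mu_add1: "mu [(a + a', b, d)] = mu [(a, b, d)] + mu [(a', b, d)]"
  unfolding mu_def by (rule ext) (simp add: lin_add[OF tril_lins(1)])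
lemma mu_add2: "mu [(a, b + b', d)] = mu [(a, b, d)] + mu [(a, b', d)]"
  unfolding mu_def by (rule ext) (simp add: lin_add[OF tril_lins(2)])
lemma mu_add3: "mu [(a, b, d + d')] = mu [(a, b, d)] + mu [(a, b, d')]"
  unfolding mu_def by (rule ext) (simp add: lin_add[OF tril_lins(3)])
lemma mu_sc1: "mu [(sc c a, b, d)] = scR c (mu [(a, b, d)])"
  unfolding mu_def scR_def by (rule ext) (simp add: lin_scale[OF tril_lins(1)])
lemma mu_sc2: "mu [(a, sc c b, d)] = scR c (mu [(a, b, d)])"
  unfolding mu_def scR_def by (rule ext) (simp add: lin_scale[OF tril_lins(2)])
lemma mu_sc3: "mu [(a, b, sc c d)] = scR c (mu [(a, b, d)])"
  unfolding mu_def scR_def by (rule ext) (simp add: lin_scale[OF tril_lins(3)])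

lemma io_pt: "pt io1" "pt io2" "pt io3"
  unfolding pt_def linR_def img_def io1_def io2_def io3_def oneR_def
  by (simp_all add: mu_add1 mu_add2 mu_add3 mu_sc1 mu_sc2 mu_sc3 tprod_def)

lemma mu_sum_single: "(\<Sum>(a,b,c)\<leftarrow>t. mu [(a,b,c)]) = mu t"
proof (induction t)
  case Nil then show ?case by (simp add: mu_Nil)
next
  case (Cons x t)
  have "mu (x # t) = mu [x] + mu t" using mu_append[of "[x]" t] by simp
  then show ?case using Cons by (cases x) simp
qed

lemma Ev_io: "Ev (io1, io2, io3) t = mu t"
  unfolding Ev_def io1_def io2_def io3_def
  by (simp add: tprod_def mu_sum_single)

definition ptt where "ptt P = (case P of (f1,f2,f3) \<Rightarrow> pt f1 \<and> pt f2 \<and> pt f3)"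

lemma ptt_r12: "ptt P \<Longrightarrow> ptt (sk.r12 P)"
  unfolding ptt_def sk.r12_def using sk.lam_cl sk.sig_cl by (auto split: prod.splits)
lemma ptt_r23: "ptt P \<Longrightarrow> ptt (sk.r23 P)"
  unfolding ptt_def sk.r23_def using sk.lam_cl sk.sig_cl by (auto split: prod.splits)

lemma Ev_c_id': "ptt P \<Longrightarrow> Ev P (c_id (brace_c D S D' T) t) = Ev (sk.r12 P) t"
  unfolding ptt_def by (cases P) (simp add: Ev_c_id)
lemma Ev_id_c': "ptt P \<Longrightarrow> Ev P (id_c (brace_c D S D' T) t) = Ev (sk.r23 P) t"
  unfolding ptt_def by (cases P) (simp add: Ev_id_c)

lemma main:
  "eq3 sc
     (c_id (brace_c D S D' T) (id_c (brace_c D S D' T) (c_id (brace_c D S D' T) [(x, y, z)])))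
     (id_c (brace_c D S D' T) (c_id (brace_c D S D' T) (id_c (brace_c D S D' T) [(x, y, z)])))"
proof -
  define C where "C = brace_c D S D' T"
  define P where "P = (io1, io2, io3)"
  have P: "ptt P" unfolding P_def ptt_def using io_pt by simp
  have "mu (c_id C (id_c C (c_id C [(x, y, z)]))) = Ev (sk.r12 (sk.r23 (sk.r12 P))) [(x, y, z)]"
    unfolding C_def P_def[symmetric] Ev_io[symmetric]
    using P by (simp add: Ev_c_id' Ev_id_c' ptt_r12 ptt_r23)
  also have "sk.r12 (sk.r23 (sk.r12 P)) = sk.r23 (sk.r12 (sk.r23 P))"
    unfolding P_def using io_pt by (intro sk.braid) simp_all
  also have "Ev (sk.r23 (sk.r12 (sk.r23 P))) [(x, y, z)] = mu (id_c C (c_id C (id_c C [(x, y, z)])))"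
    unfolding C_def P_def[symmetric] Ev_io[symmetric]
    using P by (simp add: Ev_c_id' Ev_id_c' ptt_r12 ptt_r23)
  finally have eqmu: "mu (c_id C (id_c C (c_id C [(x, y, z)]))) = mu (id_c C (c_id C (id_c C [(x, y, z)])))" .
  show ?thesis unfolding eq3_def C_def[symmetric]
  proof (intro allI impI)
    fix f g h assume lf: "lin_fun sc f" and lg: "lin_fun sc g" and lh: "lin_fun sc h"
    define M where "M = (\<lambda>a b c. f a * g b * h c)"
    have t1: "lin_fun sc (\<lambda>a. M a b c)" for b c
      unfolding M_def using lin_const_mult[OF lf, of "g b * h c"] by (simp add: ac_simps)
    have t2: "lin_fun sc (\<lambda>b. M a b c)" for a c
      unfolding M_def using lin_const_mult[OF lg, of "f a * h c"] by (simp add: ac_simps)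
    have t3: "lin_fun sc (\<lambda>c. M a b c)" for a b
      unfolding M_def using lin_const_mult[OF lh, of "f a * g b"] by (simp add: ac_simps)
    have tM: "tril M" unfolding tril_def using t1 t2 t3 by blast
    have "mu (c_id C (id_c C (c_id C [(x, y, z)]))) M = mu (id_c C (c_id C (id_c C [(x, y, z)]))) M"
      using eqmu by simp
    then show "(\<Sum>(a, b, c)\<leftarrow>c_id C (id_c C (c_id C [(x, y, z)])). f a * g b * h c) =
               (\<Sum>(a, b, c)\<leftarrow>id_c C (c_id C (id_c C [(x, y, z)])). f a * g b * h c)"
      using tM unfolding mu_def M_def by simp
  qed
qed

end

theorem proposition2p9:
  fixes sc :: "'k::field \<Rightarrow> 'a::comm_ring_1 \<Rightarrow> 'a"
    and D D' :: "'a \<Rightarrow> ('a \<times> 'a) list"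
    and e e' :: "'a \<Rightarrow> 'k"
    and S T :: "'a \<Rightarrow> 'a"
  assumes "hopf_brace sc D e S D' e' T"
  shows "\<forall>x y z. eq3 sc
     (c_id (brace_c D S D' T) (id_c (brace_c D S D' T) (c_id (brace_c D S D' T) [(x, y, z)])))
     (id_c (brace_c D S D' T) (c_id (brace_c D S D' T) (id_c (brace_c D S D' T) [(x, y, z)])))"
proof -
  have "k_algebra sc" using assms unfolding hopf_brace_def hopf_algebra_def by blast
  then interpret hbrace sc D e S D' e' T
    by (intro hbrace.intro kalg.intro hbrace_axioms.intro assms)
  show ?thesis using main by blast
qed


end
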